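(* Let $(\mathcal{X},\rho)$ be a totally bounded metric space and $\eta:\mathcal{X}\to\mathcal{Y}$ a function. There exists a sequence of instances $(X_n)_{n\ge0}$ in $\mathcal{X}$ on which the nearest neighbor rule is not online consistent on $\eta$ if and only if there is no positive separation between classes, i.e. \[\inf_{x,x'\in\mathcal{X}:\ \eta(x)\neq\eta(x')}\rho(x,x')=0.\]
   Context: For a deterministic sequence $(X_n)_{n\ge0}$, a nearest neighbor sequence is any $(\tilde X_n)_{n\ge1}$ with $\tilde X_n\in\arg\min_{x\in\{X_0,\dots,X_{n-1}\}}\rho(X_n,x)$. The nearest neighbor rule is online consistent on $\eta$ for the sequence if, for every such choice of nearest neighbors, $\limsup_{N\to\infty}\frac1N\sum_{n=1}^N\mathbb{1}\{\eta(X_n)\neq\eta(\tilde X_n)\}=0$. The infimum over the empty set is $+\infty$. *)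

theory Defs
  imports "HOL-Analysis.Analysis"
begin

definition nn_seq :: "(nat \<Rightarrow> 'a::metric_space) \<Rightarrow> (nat \<Rightarrow> 'a) \<Rightarrow> bool" where
  "nn_seq X Xt \<longleftrightarrow>
     (\<forall>n\<ge>1. Xt n \<in> X ` {..<n} \<and> (\<forall>k<n. dist (X n) (Xt n) \<le> dist (X n) (X k)))"

definition nn_err :: "('a \<Rightarrow> 'b) \<Rightarrow> (nat \<Rightarrow> 'a) \<Rightarrow> (nat \<Rightarrow> 'a) \<Rightarrow> nat \<Rightarrow> real" where
  "nn_err \<eta> X Xt N = (\<Sum>n=1..N. if \<eta> (X n) \<noteq> \<eta> (Xt n) then 1 else 0) / real N"

definition online_consistent :: "('a::metric_space \<Rightarrow> 'b) \<Rightarrow> (nat \<Rightarrow> 'a) \<Rightarrow> bool" where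
  "online_consistent \<eta> X \<longleftrightarrow>
     (\<forall>Xt. nn_seq X Xt \<longrightarrow> limsup (\<lambda>N. ereal (nn_err \<eta> X Xt N)) = 0)"

text \<open>Separation between classes; the infimum over the empty set is +\<infinity> in ereal.\<close>
definition class_separation :: "'a::metric_space set \<Rightarrow> ('a \<Rightarrow> 'b) \<Rightarrow> ereal" where
  "class_separation S \<eta> =
     Inf {ereal (dist x x') | x x'. x \<in> S \<and> x' \<in> S \<and> \<eta> x \<noteq> \<eta> x'}"

end

theory Submission
  imports Defs
begin

lemma sep_pos:
  fixes S :: "'a::metric_space set" and \<eta> :: "'a \<Rightarrow> 'b"
  assumes "class_separation S \<eta> \<noteq> 0"
  obtains g where "g > 0" "\<And>x x'. x \<in> S \<Longrightarrow> x' \<in> S \<Longrightarrow> \<eta> x \<noteq> \<eta> x' \<Longrightarrow> g \<le> dist x x'"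
proof -
  let ?A = "{ereal (dist x x') | x x'. x \<in> S \<and> x' \<in> S \<and> \<eta> x \<noteq> \<eta> x'}"
  have ge: "0 \<le> Inf ?A" by (rule Inf_greatest) auto
  with assms have pos: "0 < Inf ?A" unfolding class_separation_def by auto
  define g where "g = (if Inf ?A = \<infinity> then 1 else min 1 (real_of_ereal (Inf ?A)))"
  have "g > 0" using pos ge unfolding g_def
    by (cases "Inf ?A") auto
  moreover have "ereal g \<le> Inf ?A" unfolding g_def
    using pos by (cases "Inf ?A") auto
  moreover have "g \<le> dist x x'" if "x \<in> S" "x' \<in> S" "\<eta> x \<noteq> \<eta> x'" for x x'
  proof -
    have "Inf ?A \<le> ereal (dist x x')" by (rule Inf_lower) (use that in auto)
    with \<open>ereal g \<le> Inf ?A\<close> have "ereal g \<le> ereal (dist x x')" by (rule order_trans)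
    then show ?thesis by simp
  qed
  ultimately show ?thesis using that by blast
qed

lemma dirA:
  fixes S :: "'a::metric_space set" and \<eta> :: "'a \<Rightarrow> 'b"
  assumes tb: "totally_bounded S" and sep: "class_separation S \<eta> \<noteq> 0" and XS: "range X \<subseteq> S"
  shows "online_consistent \<eta> X"
  unfolding online_consistent_def
proof (intro allI impI)
  fix Xt assume nn: "nn_seq X Xt"
  obtain g where g: "g > 0" "\<And>x x'. x \<in> S \<Longrightarrow> x' \<in> S \<Longrightarrow> \<eta> x \<noteq> \<eta> x' \<Longrightarrow> g \<le> dist x x'"
    using sep_pos[OF sep] by blast
  define E where "E = {n. n \<ge> 1 \<and> \<eta> (X n) \<noteq> \<eta> (Xt n)}"
  have far: "g \<le> dist (X n) (X k)" if "n \<in> E" "k < n" for n k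
  proof -
    from that nn have Xt: "Xt n \<in> X ` {..<n}" "dist (X n) (Xt n) \<le> dist (X n) (X k)"
      unfolding nn_seq_def E_def by auto
    have "g \<le> dist (X n) (Xt n)" using g(2)[of "X n" "Xt n"] Xt(1) XS that(1)
      unfolding E_def by auto
    with Xt show ?thesis by linarith
  qed
  obtain K where K: "finite K" "S \<subseteq> (\<Union>x\<in>K. {y. dist x y < g/2})"
    using tb g(1) unfolding totally_bounded_metric by (meson half_gt_zero)
  define c where "c n = (SOME x. x \<in> K \<and> dist x (X n) < g/2)" for n
  have c: "c n \<in> K \<and> dist (c n) (X n) < g/2" for n
  proof -
    have "\<exists>x. x \<in> K \<and> dist x (X n) < g/2" using K(2) XS by blast
    then show ?thesis unfolding c_def by (rule someI_ex)
  qed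
  have "inj_on c E"
  proof (rule inj_onI)
    fix n m assume "n \<in> E" "m \<in> E" "c n = c m"
    show "n = m"
    proof (rule ccontr)
      assume "n \<noteq> m"
      then have "g \<le> dist (X n) (X m)"
        using far \<open>n \<in> E\<close> \<open>m \<in> E\<close> by (metis dist_commute linorder_neqE_nat)
      moreover have "dist (X n) (X m) \<le> dist (c n) (X n) + dist (c n) (X m)"
        by (metis dist_commute dist_triangle)
      ultimately show False using c[of n] c[of m] \<open>c n = c m\<close> by auto
    qed
  qed
  then have finE: "finite E" using K(1) c
    by (metis finite_imageD finite_subset image_subsetI)
  define C where "C = card E"
  have bound: "nn_err \<eta> X Xt N \<le> real C / real N" for N
  proof -
    have "(\<Sum>n=1..N. if \<eta> (X n) \<noteq> \<eta> (Xt n) then 1 else 0 :: real) = real (card (E \<inter> {1..N}))"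
      unfolding E_def by (simp add: sum.If_cases Int_def conj_commute conj_left_commute)
    also have "\<dots> \<le> real C" unfolding C_def using finE by (simp add: card_mono)
    finally show ?thesis unfolding nn_err_def by (simp add: divide_right_mono)
  qed
  have nonneg: "0 \<le> nn_err \<eta> X Xt N" for N
    unfolding nn_err_def by (auto intro!: sum_nonneg divide_nonneg_nonneg)
  have "(\<lambda>N. real C / real N) \<longlonglongrightarrow> 0"
    by (rule lim_const_over_n)
  have "(\<lambda>N. nn_err \<eta> X Xt N) \<longlonglongrightarrow> 0"
  proof (rule real_tendsto_sandwich[where f="\<lambda>_. 0" and h="\<lambda>N. real C / real N"])
    show "\<forall>\<^sub>F n in sequentially. 0 \<le> nn_err \<eta> X Xt n" using nonneg by simp
    show "\<forall>\<^sub>F n in sequentially. nn_err \<eta> X Xt n \<le> real C / real n" using bound by simp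
  qed (simp_all add: \<open>(\<lambda>N. real C / real N) \<longlonglongrightarrow> 0\<close>)
  then have "(\<lambda>N. ereal (nn_err \<eta> X Xt N)) \<longlonglongrightarrow> ereal 0" by (rule tendsto_ereal)
  then have "limsup (\<lambda>N. ereal (nn_err \<eta> X Xt N)) = ereal 0"
    by (rule lim_imp_Limsup[OF trivial_limit_sequentially])
  then show "limsup (\<lambda>N. ereal (nn_err \<eta> X Xt N)) = 0" by (simp add: zero_ereal_def)
qed


lemma exists_min:
  fixes b :: "'a::metric_space"
  assumes "finite T" "T \<noteq> {}"
  obtains q where "q \<in> T" "\<And>r. r \<in> T \<Longrightarrow> dist b q \<le> dist b r"
proof -
  have "Min (dist b ` T) \<in> dist b ` T" using assms by simp
  then obtain q where q: "q \<in> T" "dist b q = Min (dist b ` T)" by auto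
  show ?thesis
    by (rule that[OF q(1)]) (use assms q in simp)
qed

lemma alt:
  fixes b a :: "'a::metric_space" and \<eta> :: "'a \<Rightarrow> 'b"
  assumes "finite P" "\<eta> a \<noteq> \<eta> b"
  shows "(\<exists>q\<in>insert a P. \<eta> q \<noteq> \<eta> b \<and> (\<forall>r\<in>insert a P. dist b q \<le> dist b r))
     \<or> (\<exists>p\<in>P. \<eta> p = \<eta> b \<and> dist b p < dist b a)"
proof -
  obtain q where q: "q \<in> insert a P" "\<And>r. r \<in> insert a P \<Longrightarrow> dist b q \<le> dist b r"
    using exists_min[of "insert a P" b] assms(1) by auto
  show ?thesis
  proof (cases "\<eta> q \<noteq> \<eta> b")
    case True then show ?thesis using q by blast
  next
    case False
    show ?thesis
    proof (cases "dist b q = dist b a")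
      case True
      then show ?thesis using q assms(2) by (intro disjI1 bexI[of _ a]) auto
    next
      case F2: False
      then have "q \<noteq> a" by auto
      moreover have "dist b q \<le> dist b a" using q(2) by auto
      ultimately show ?thesis using q(1) False F2 by (intro disjI2 bexI[of _ q]) auto
    qed
  qed
qed

definition good :: "'a::metric_space set \<Rightarrow> ('a \<Rightarrow> 'b) \<Rightarrow> 'a set \<Rightarrow> 'a \<Rightarrow> 'a \<Rightarrow> bool" where
  "good S \<eta> P a b \<longleftrightarrow> a \<in> S \<and> b \<in> S \<and>
     (\<exists>q\<in>insert a P. \<eta> q \<noteq> \<eta> b \<and> (\<forall>r\<in>insert a P. dist b q \<le> dist b r))"

lemma good_exists:
  fixes S :: "'a::metric_space set" and \<eta> :: "'a \<Rightarrow> 'b"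
  assumes sep: "class_separation S \<eta> = 0" and P: "finite P"
  shows "\<exists>a b. good S \<eta> P a b"
proof -
  define D where "D = {dist p p' | p p'. p \<in> P \<and> p' \<in> P \<and> \<eta> p \<noteq> \<eta> p'}"
  have finD: "finite D"
  proof -
    have "D \<subseteq> (\<lambda>(p, p'). dist p p') ` (P \<times> P)" unfolding D_def by auto
    then show ?thesis using P by (meson finite_SigmaI finite_imageI finite_subset)
  qed
  define g where "g = Min (insert 1 D)"
  have gpos: "g > 0" unfolding g_def using finD
    by (subst Min_gr_iff) (auto simp: D_def)
  have gle: "g \<le> dist p p'" if "p \<in> P" "p' \<in> P" "\<eta> p \<noteq> \<eta> p'" for p p'
    unfolding g_def using finD that by (intro Min_le) (auto simp: D_def)
  have "Inf {ereal (dist x x') | x x'. x \<in> S \<and> x' \<in> S \<and> \<eta> x \<noteq> \<eta> x'} < ereal (g/3)"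
    using sep gpos unfolding class_separation_def by simp
  then obtain a b where ab: "a \<in> S" "b \<in> S" "\<eta> a \<noteq> \<eta> b" "dist a b < g/3"
    unfolding Inf_less_iff by auto
  show ?thesis
  proof (rule ccontr)
    assume na: "\<not> ?thesis"
    have "\<not> (\<exists>q\<in>insert a P. \<eta> q \<noteq> \<eta> b \<and> (\<forall>r\<in>insert a P. dist b q \<le> dist b r))"
      using na ab unfolding good_def by blast
    then obtain p where p: "p \<in> P" "\<eta> p = \<eta> b" "dist b p < dist b a"
      using alt[OF P ab(3)] by blast
    have "\<not> (\<exists>q\<in>insert b P. \<eta> q \<noteq> \<eta> a \<and> (\<forall>r\<in>insert b P. dist a q \<le> dist a r))"
      using na ab unfolding good_def by blast
    then obtain p' where p': "p' \<in> P" "\<eta> p' = \<eta> a" "dist a p' < dist a b"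
      using alt[OF P, where a=b and b=a] ab(3) by metis
    have "dist p p' \<le> dist p b + dist b a + dist a p'"
      by (metis add_mono dist_triangle order_trans order_refl)
    also have "\<dots> < g" using p p' ab(4) by (simp add: dist_commute)
    finally show False using gle[OF p(1) p'(1)] p(2) p'(2) ab(3) by auto
  qed
qed

primrec build :: "('a list \<Rightarrow> 'a \<times> 'a) \<Rightarrow> nat \<Rightarrow> 'a list" where
  "build f 0 = []"
| "build f (Suc k) = build f k @ [fst (f (build f k)), snd (f (build f k))]"

lemma build_len: "length (build f k) = 2 * k"
  by (induction k) auto

lemma build_nth: "k \<le> m \<Longrightarrow> n < 2 * k \<Longrightarrow> build f m ! n = build f k ! n"
proof (induction m)
  case 0 then show ?case by simp
next
  case (Suc m)
  show ?case
  proof (cases "k = Suc m")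
    case True then show ?thesis by simp
  next
    case False
    then have "k \<le> m" using Suc.prems by simp
    then have "n < length (build f m)" using Suc.prems build_len[of f m] by simp
    then show ?thesis using Suc.IH[OF \<open>k \<le> m\<close> Suc.prems(2)] by (simp add: nth_append)
  qed
qed


lemma odd_count: "2 * (\<Sum>n=1..N. if odd n then 1 else 0 :: real) = real N + (if odd N then 1 else 0)"
  by (induction N) auto

lemma dirB:
  fixes S :: "'a::metric_space set" and \<eta> :: "'a \<Rightarrow> 'b"
  assumes sep: "class_separation S \<eta> = 0"
  shows "\<exists>X. range X \<subseteq> S \<and> \<not> online_consistent \<eta> X"
proof -
  define f where "f l = (SOME ab. good S \<eta> (set l) (fst ab) (snd ab))" for l :: "'a list"
  have fgood: "good S \<eta> (set l) (fst (f l)) (snd (f l))" for l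
  proof -
    obtain a b where "good S \<eta> (set l) a b" using good_exists[OF sep, of "set l"] by auto
    then have "\<exists>ab. good S \<eta> (set l) (fst ab) (snd ab)" by (intro exI[of _ "(a, b)"]) simp
    then show ?thesis unfolding f_def by (rule someI_ex)
  qed
  define X where "X n = build f (Suc (n div 2)) ! n" for n
  have Xb: "X n = build f k ! n" if "n < 2 * k" for n k
  proof (cases "Suc (n div 2) \<le> k")
    case True then show ?thesis unfolding X_def by (intro build_nth[symmetric]) auto
  next
    case False then show ?thesis unfolding X_def using that by (intro build_nth) auto
  qed
  have setb: "set (build f k) = X ` {..<2 * k}" for k
    by (auto simp: set_conv_nth build_len Xb)
  have Xa: "X (2 * k) = fst (f (build f k))" for k
    using Xb[of "2 * k" "Suc k"] by (simp add: nth_append build_len)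
  have Xbb: "X (Suc (2 * k)) = snd (f (build f k))" for k
    using Xb[of "Suc (2 * k)" "Suc k"] by (simp add: nth_append build_len)
  have rng: "range X \<subseteq> S"
  proof
    fix y assume "y \<in> range X"
    then obtain n where n: "y = X n" by auto
    have g: "fst (f (build f (n div 2))) \<in> S" "snd (f (build f (n div 2))) \<in> S"
      using fgood[of "build f (n div 2)"] unfolding good_def by blast+
    have "n = 2 * (n div 2) \<or> n = Suc (2 * (n div 2))" by presburger
    then show "y \<in> S"
    proof
      assume "n = 2 * (n div 2)"
      then have "X n = fst (f (build f (n div 2)))" using Xa by metis
      then show ?thesis using g n by simp
    next
      assume "n = Suc (2 * (n div 2))"
      then have "X n = snd (f (build f (n div 2)))" using Xbb by metis
      then show ?thesis using g n by simp
    qed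
  qed
  have ex: "\<exists>q. q \<in> X ` {..<n} \<and> (\<forall>k<n. dist (X n) q \<le> dist (X n) (X k)) \<and> (odd n \<longrightarrow> \<eta> q \<noteq> \<eta> (X n))"
    if n1: "n \<ge> 1" for n
  proof (cases "odd n")
    case False
    obtain q where "q \<in> X ` {..<n}" "\<And>r. r \<in> X ` {..<n} \<Longrightarrow> dist (X n) q \<le> dist (X n) r"
    proof (rule exists_min[of "X ` {..<n}" "X n"])
      show "X ` {..<n} \<noteq> {}" using n1 by (auto simp: lessThan_empty_iff)
    qed auto
    then show ?thesis using False by blast
  next
    case True
    then obtain k where k: "n = Suc (2 * k)" by (metis oddE Suc_eq_plus1)
    have "X ` {..<n} = insert (X (2 * k)) (X ` {..<2 * k})"
      unfolding k by (simp add: lessThan_Suc)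
    also have "\<dots> = insert (fst (f (build f k))) (set (build f k))" by (simp add: setb Xa)
    finally have eq: "X ` {..<n} = insert (fst (f (build f k))) (set (build f k))" .
    have Xn: "X n = snd (f (build f k))" using Xbb k by simp
    from fgood[of "build f k"] obtain q where
      q: "q \<in> insert (fst (f (build f k))) (set (build f k))"
         "\<eta> q \<noteq> \<eta> (snd (f (build f k)))"
         "\<forall>r\<in>insert (fst (f (build f k))) (set (build f k)). dist (snd (f (build f k))) q \<le> dist (snd (f (build f k))) r"
      unfolding good_def by blast
    have "q \<in> X ` {..<n}" using q(1) eq by simp
    moreover have "\<eta> q \<noteq> \<eta> (X n)" using q(2) Xn by simp
    moreover have "\<forall>j<n. dist (X n) q \<le> dist (X n) (X j)"
    proof (intro allI impI)
      fix j assume "j < n"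
      then have "X j \<in> insert (fst (f (build f k))) (set (build f k))" using eq by blast
      then show "dist (X n) q \<le> dist (X n) (X j)" using q(3) unfolding Xn by blast
    qed
    ultimately show ?thesis using True by blast
  qed
  define Xt where "Xt n = (SOME q. q \<in> X ` {..<n} \<and> (\<forall>k<n. dist (X n) q \<le> dist (X n) (X k)) \<and> (odd n \<longrightarrow> \<eta> q \<noteq> \<eta> (X n)))" for n
  have Xt: "Xt n \<in> X ` {..<n} \<and> (\<forall>k<n. dist (X n) (Xt n) \<le> dist (X n) (X k)) \<and> (odd n \<longrightarrow> \<eta> (Xt n) \<noteq> \<eta> (X n))"
    if "n \<ge> 1" for n
    unfolding Xt_def by (rule someI_ex[OF ex[OF that]])
  have nn: "nn_seq X Xt" unfolding nn_seq_def using Xt by blast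
  have half: "1/2 \<le> nn_err \<eta> X Xt N" if "N \<ge> 1" for N
  proof -
    have "(\<Sum>n=1..N. if odd n then 1 else 0 :: real) \<le> (\<Sum>n=1..N. if \<eta> (X n) \<noteq> \<eta> (Xt n) then 1 else 0)"
    proof (rule sum_mono)
      fix n assume "n \<in> {1..N}"
      then have "odd n \<longrightarrow> \<eta> (Xt n) \<noteq> \<eta> (X n)" using Xt[of n] by simp
      then show "(if odd n then 1 else 0 :: real) \<le> (if \<eta> (X n) \<noteq> \<eta> (Xt n) then 1 else 0)"
        by auto
    qed
    moreover have "real N / 2 \<le> (\<Sum>n=1..N. if odd n then 1 else 0 :: real)"
      using odd_count[of N] by (simp split: if_splits)
    ultimately have "real N / 2 \<le> (\<Sum>n=1..N. if \<eta> (X n) \<noteq> \<eta> (Xt n) then 1 else 0)" by linarith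
    then show ?thesis unfolding nn_err_def using that by (simp add: field_simps)
  qed
  have "ereal (1/2) \<le> liminf (\<lambda>N. ereal (nn_err \<eta> X Xt N))"
    by (rule Liminf_bounded) (use half in \<open>auto simp: eventually_sequentially\<close>)
  also have "\<dots> \<le> limsup (\<lambda>N. ereal (nn_err \<eta> X Xt N))"
    by (rule Liminf_le_Limsup) simp
  finally have "limsup (\<lambda>N. ereal (nn_err \<eta> X Xt N)) \<noteq> 0" by (auto simp: zero_ereal_def)
  then have "\<not> online_consistent \<eta> X" using nn unfolding online_consistent_def by blast
  then show ?thesis using rng by blast
qed

theorem proposition1:
  fixes S :: "'a::metric_space set" and \<eta> :: "'a \<Rightarrow> 'b"
  assumes "totally_bounded S"
  shows "(\<exists>X. range X \<subseteq> S \<and> \<not> online_consistent \<eta> X) \<longleftrightarrow> class_separation S \<eta> = 0"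
  using dirA[OF assms] dirB by blast

end
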